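(* Let $G$ be a finite claw-free graph. Then its modular decomposition tree $T(G)$ has at most 5 layers, i.e. every path from the root to a leaf contains at most 5 nodes (the root being in layer 1).
   Context: A claw is an induced subgraph isomorphic to $K_{1,3}$. A module of $G=(V,E)$ is a set $M\subseteq V$ such that every vertex outside $M$ is adjacent either to all or to none of $M$. A graph is prime if it has at least 4 vertices and only the modules $\emptyset$, singletons and $V$. Modular decomposition (Gallai): exactly one holds: (single) $G$ is one vertex; (parallel) $G$ is disconnected; (serial) the complement of $G$ is disconnected; (prime) $G$ and its complement are connected, $|V|\ge4$, and the maximal proper modules partition $V$ into $P$ with $G/P$ prime. The tree $T(G)$ is defined recursively: single case a leaf; parallel case a root labelled "parallel" with children $T(G[C])$ for the connected components $C$ of $G$; serial case a root labelled "serial" with children $T(G[C])$ for the connected components $C$ of the complement; prime case a root labelled "prime" with children $T(G[M])$, $M\in P$. *)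

theory Defs
  imports Main
begin

text \<open>A finite simple graph is given by a finite vertex set V and a symmetric,
irreflexive adjacency relation E; induced subgraphs G[S] are obtained by
restricting E to S.\<close>

definition simple_graph :: "'a set \<Rightarrow> ('a \<Rightarrow> 'a \<Rightarrow> bool) \<Rightarrow> bool" where
  "simple_graph V E \<longleftrightarrow> finite V \<and> (\<forall>x y. E x y \<longrightarrow> E y x) \<and> (\<forall>x. \<not> E x x)"

definition claw_free :: "'a set \<Rightarrow> ('a \<Rightarrow> 'a \<Rightarrow> bool) \<Rightarrow> bool" where
  "claw_free V E \<longleftrightarrow> \<not> (\<exists>c\<in>V. \<exists>a\<in>V. \<exists>b\<in>V. \<exists>d\<in>V.
      distinct [c, a, b, d] \<and> E c a \<and> E c b \<and> E c d \<and>
      \<not> E a b \<and> \<not> E a d \<and> \<not> E b d)"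

definition compl_rel :: "('a \<Rightarrow> 'a \<Rightarrow> bool) \<Rightarrow> 'a \<Rightarrow> 'a \<Rightarrow> bool" where
  "compl_rel E x y \<longleftrightarrow> x \<noteq> y \<and> \<not> E x y"

definition edges_on :: "('a \<Rightarrow> 'a \<Rightarrow> bool) \<Rightarrow> 'a set \<Rightarrow> ('a \<times> 'a) set" where
  "edges_on E S = {(u, v). u \<in> S \<and> v \<in> S \<and> E u v}"

definition connected_on :: "('a \<Rightarrow> 'a \<Rightarrow> bool) \<Rightarrow> 'a set \<Rightarrow> bool" where
  "connected_on E S \<longleftrightarrow> S \<noteq> {} \<and> (\<forall>x\<in>S. \<forall>y\<in>S. (x, y) \<in> (edges_on E S)\<^sup>*)"

definition component_of :: "('a \<Rightarrow> 'a \<Rightarrow> bool) \<Rightarrow> 'a set \<Rightarrow> 'a set \<Rightarrow> bool" where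
  "component_of E S C \<longleftrightarrow> (\<exists>x\<in>S. C = {y \<in> S. (x, y) \<in> (edges_on E S)\<^sup>*})"

definition module_of :: "('a \<Rightarrow> 'a \<Rightarrow> bool) \<Rightarrow> 'a set \<Rightarrow> 'a set \<Rightarrow> bool" where
  "module_of E S M \<longleftrightarrow> M \<subseteq> S \<and>
     (\<forall>v\<in>S - M. (\<forall>m\<in>M. E v m) \<or> (\<forall>m\<in>M. \<not> E v m))"

definition max_proper_module :: "('a \<Rightarrow> 'a \<Rightarrow> bool) \<Rightarrow> 'a set \<Rightarrow> 'a set \<Rightarrow> bool" where
  "max_proper_module E S M \<longleftrightarrow> module_of E S M \<and> M \<noteq> S \<and>
     (\<forall>M'. module_of E S M' \<and> M' \<noteq> S \<and> M \<subseteq> M' \<longrightarrow> M' = M)"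

text \<open>md_child E S C: the node T(G[C]) is a child of the root of T(G[S]) in the
modular decomposition tree (parallel, serial and prime case respectively;
a single vertex is a leaf and has no children).\<close>
definition md_child :: "('a \<Rightarrow> 'a \<Rightarrow> bool) \<Rightarrow> 'a set \<Rightarrow> 'a set \<Rightarrow> bool" where
  "md_child E S C \<longleftrightarrow>
     (card S \<ge> 2 \<and> \<not> connected_on E S \<and> component_of E S C) \<or>
     (card S \<ge> 2 \<and> connected_on E S \<and> \<not> connected_on (compl_rel E) S \<and>
        component_of (compl_rel E) S C) \<or>
     (card S \<ge> 4 \<and> connected_on E S \<and> connected_on (compl_rel E) S \<and>
        max_proper_module E S C)"

text \<open>A root-to-node path in T(G), G = (V,E), listed by the vertex sets of the nodes.\<close>
definition md_path :: "'a set \<Rightarrow> ('a \<Rightarrow> 'a \<Rightarrow> bool) \<Rightarrow> 'a set list \<Rightarrow> bool" where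
  "md_path V E ps \<longleftrightarrow> ps \<noteq> [] \<and> hd ps = V \<and>
     (\<forall>i. Suc i < length ps \<longrightarrow> md_child E (ps ! i) (ps ! Suc i))"

end

theory Submission
  imports Defs
begin

definition depth_le :: "('a \<Rightarrow> 'a \<Rightarrow> bool) \<Rightarrow> 'a set \<Rightarrow> nat \<Rightarrow> bool" where
  "depth_le E S k \<longleftrightarrow> (\<forall>ps. md_path S E ps \<longrightarrow> length ps \<le> k)"

definition is_clique :: "('a \<Rightarrow> 'a \<Rightarrow> bool) \<Rightarrow> 'a set \<Rightarrow> bool" where
  "is_clique E S \<longleftrightarrow> (\<forall>a\<in>S. \<forall>b\<in>S. a \<noteq> b \<longrightarrow> E a b)"

lemma md_path_Cons2:
  "md_path S E (S # C # rest) \<longleftrightarrow> md_child E S C \<and> md_path C E (C # rest)"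
proof
  assume h: "md_path S E (S # C # rest)"
  have "Suc 0 < length (S # C # rest) \<longrightarrow> md_child E ((S # C # rest) ! 0) ((S # C # rest) ! Suc 0)"
    using h unfolding md_path_def by blast
  then have "md_child E S C" by simp
  moreover have "md_path C E (C # rest)"
    unfolding md_path_def
  proof (intro conjI allI impI)
    fix i assume "Suc i < length (C # rest)"
    then have "Suc (Suc i) < length (S # C # rest)" by simp
    then have "md_child E ((S # C # rest) ! Suc i) ((S # C # rest) ! Suc (Suc i))"
      using h[unfolded md_path_def] by blast
    then show "md_child E ((C # rest) ! i) ((C # rest) ! Suc i)" by simp
  qed auto
  ultimately show "md_child E S C \<and> md_path C E (C # rest)" by blast
next
  assume h: "md_child E S C \<and> md_path C E (C # rest)"
  show "md_path S E (S # C # rest)"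
    unfolding md_path_def
  proof (intro conjI allI impI)
    fix i assume i: "Suc i < length (S # C # rest)"
    show "md_child E ((S # C # rest) ! i) ((S # C # rest) ! Suc i)"
    proof (cases i)
      case 0 then show ?thesis using h by simp
    next
      case (Suc j)
      then have "Suc j < length (C # rest)" using i by simp
      then have "md_child E ((C # rest) ! j) ((C # rest) ! Suc j)"
        using h[unfolded md_path_def] conjunct2 by blast
      then show ?thesis using Suc by simp
    qed
  qed auto
qed

lemma depth_step:
  assumes "\<And>C. md_child E S C \<Longrightarrow> depth_le E C k"
  shows "depth_le E S (Suc k)"
  unfolding depth_le_def
proof (intro allI impI)
  fix ps assume p: "md_path S E ps"
  then obtain rest where ps: "ps = S # rest" unfolding md_path_def
    by (metis list.collapse)
  show "length ps \<le> Suc k"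
  proof (cases rest)
    case Nil then show ?thesis using ps by simp
  next
    case (Cons C r)
    have "md_child E S C" "md_path C E (C # r)" using p ps Cons md_path_Cons2 by auto
    then have "length (C # r) \<le> k" using assms unfolding depth_le_def by blast
    then show ?thesis using ps Cons by simp
  qed
qed

lemma depth_mono: "depth_le E S k \<Longrightarrow> k \<le> m \<Longrightarrow> depth_le E S m"
  unfolding depth_le_def by fastforce

lemma conn_exit:
  assumes "connected_on R S" "x \<in> S" "x \<in> X" "y \<in> S" "y \<notin> X"
  shows "\<exists>u z. u \<in> S \<and> u \<in> X \<and> z \<in> S \<and> z \<notin> X \<and> R u z"
proof -
  have "(x, y) \<in> (edges_on R S)\<^sup>*" using assms unfolding connected_on_def by blast
  then show ?thesis using assms(5)
  proof (induction rule: rtrancl_induct)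
    case base then show ?case using assms(3) by simp
  next
    case (step y z)
    show ?case
    proof (cases "y \<in> X")
      case True then show ?thesis using step unfolding edges_on_def by blast
    next
      case False then show ?thesis using step.IH by blast
    qed
  qed
qed

lemma comp_sub: "component_of R S C \<Longrightarrow> C \<subseteq> S"
  unfolding component_of_def by blast

lemma comp_closed:
  assumes "component_of R S C" "c \<in> C" "d \<in> S" "R c d"
  shows "d \<in> C"
proof -
  obtain x where x: "x \<in> S" "C = {y \<in> S. (x, y) \<in> (edges_on R S)\<^sup>*}"
    using assms(1) unfolding component_of_def by blast
  have "(c, d) \<in> edges_on R S" using assms x unfolding edges_on_def by blast
  moreover have "(x, c) \<in> (edges_on R S)\<^sup>*" using assms(2) x by simp
  ultimately have "(x, d) \<in> (edges_on R S)\<^sup>*" by (simp add: rtrancl.rtrancl_into_rtrancl)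
  then show ?thesis using assms(3) x by simp
qed

lemma comp_conn:
  assumes sym: "\<And>x y. R x y \<Longrightarrow> R y x" and c: "component_of R S C"
  shows "connected_on R C"
proof -
  obtain x where x: "x \<in> S" "C = {y \<in> S. (x, y) \<in> (edges_on R S)\<^sup>*}"
    using c unfolding component_of_def by blast
  have xC: "x \<in> C" using x by simp
  have reach: "(x, y) \<in> (edges_on R C)\<^sup>*" if "y \<in> C" for y
  proof -
    have "(x, y) \<in> (edges_on R S)\<^sup>*" using that x by simp
    then show ?thesis using that
    proof (induction rule: rtrancl_induct)
      case base then show ?case by simp
    next
      case (step y z)
      have "z \<in> S" using step(2) unfolding edges_on_def by blast
      have yC: "y \<in> C" using step(1,2) x unfolding edges_on_def by blast
      have "(y, z) \<in> edges_on R C" using step(2) yC step.prems unfolding edges_on_def by blast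
      then show ?case using step.IH yC by (meson rtrancl.rtrancl_into_rtrancl)
    qed
  qed
  have "sym (edges_on R C)" using sym unfolding edges_on_def sym_def by blast
  then have sr: "sym ((edges_on R C)\<^sup>*)" by (rule sym_rtrancl)
  show ?thesis unfolding connected_on_def
  proof (intro conjI ballI)
    show "C \<noteq> {}" using xC by blast
  next
    fix a b assume "a \<in> C" "b \<in> C"
    then have "(x, a) \<in> (edges_on R C)\<^sup>*" "(x, b) \<in> (edges_on R C)\<^sup>*"
      using reach by auto
    then have "(a, x) \<in> (edges_on R C)\<^sup>*" "(x, b) \<in> (edges_on R C)\<^sup>*"
      using sr by (auto intro: symD)
    then show "(a, b) \<in> (edges_on R C)\<^sup>*" by simp
  qed
qed

lemma comp_not_all:
  assumes sym: "\<And>x y. R x y \<Longrightarrow> R y x" and c: "component_of R S C"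
    and nc: "\<not> connected_on R S"
  shows "\<exists>d\<in>S. d \<notin> C"
proof (rule ccontr)
  assume "\<not> ?thesis"
  then have "C = S" using comp_sub[OF c] by blast
  then show False using comp_conn[OF sym c] nc by simp
qed

lemma compl_sym: "compl_rel E x y \<Longrightarrow> (\<And>x y. E x y \<Longrightarrow> E y x) \<Longrightarrow> compl_rel E y x"
  unfolding compl_rel_def by blast


lemma two_elems: "card S \<ge> 2 \<Longrightarrow> \<exists>a\<in>S. \<exists>b\<in>S. a \<noteq> b"
proof (rule ccontr)
  assume c: "card S \<ge> 2" and n: "\<not> (\<exists>a\<in>S. \<exists>b\<in>S. a \<noteq> b)"
  have "finite S" using c by (metis card.infinite not_numeral_le_zero)
  then have "card S \<le> Suc 0" using n card_le_Suc0_iff_eq by blast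
  then show False using c by simp
qed

lemma small_depth: "card C \<le> 1 \<Longrightarrow> depth_le E C (Suc 0)"
  by (rule depth_step) (auto simp: md_child_def)

lemma child_sub: "md_child E S C \<Longrightarrow> C \<subseteq> S"
  unfolding md_child_def max_proper_module_def module_of_def using comp_sub by blast

lemma clique_depth:
  assumes cl: "is_clique E S"
  shows "depth_le E S 2"
proof -
  have "card C \<le> 1" if ch: "md_child E S C" for C
  proof -
    have nocomp: "edges_on (compl_rel E) S = {}"
      using cl unfolding edges_on_def compl_rel_def is_clique_def by blast
    have conn: "connected_on E S" if c2: "card S \<ge> 2"
    proof -
      obtain a where "a \<in> S" using two_elems[OF c2] by blast
      moreover have "(x, y) \<in> (edges_on E S)\<^sup>*" if "x \<in> S" "y \<in> S" for x y
      proof (cases "x = y")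
        case True then show ?thesis by simp
      next
        case False
        then have "(x, y) \<in> edges_on E S" using cl that unfolding is_clique_def edges_on_def by blast
        then show ?thesis by blast
      qed
      ultimately show ?thesis unfolding connected_on_def by blast
    qed
    have nco: "\<not> connected_on (compl_rel E) S" if c2: "card S \<ge> 2"
    proof
      assume h: "connected_on (compl_rel E) S"
      obtain a b where "a \<in> S" "b \<in> S" "a \<noteq> b" using two_elems[OF c2] by blast
      then have "(a, b) \<in> {}\<^sup>*" using h nocomp unfolding connected_on_def by metis
      then show False using \<open>a \<noteq> b\<close> by simp
    qed
    from ch show ?thesis unfolding md_child_def
    proof (elim disjE conjE)
      assume "card S \<ge> 2" "\<not> connected_on E S" then show ?thesis using conn by blast
    next
      assume "component_of (compl_rel E) S C"
      then obtain x where "C = {y \<in> S. (x, y) \<in> (edges_on (compl_rel E) S)\<^sup>*}"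
        unfolding component_of_def by blast
      then have "C \<subseteq> {x}" using nocomp by auto
      then show ?thesis by (metis card.empty card_mono finite.emptyI finite.insertI
          is_singletonI is_singleton_altdef le_numeral_extra(1) subset_singletonD)
    next
      assume "card S \<ge> 4" "connected_on (compl_rel E) S"
      then show ?thesis using nco by simp
    qed
  qed
  then show ?thesis unfolding numeral_2_eq_2 by (intro depth_step small_depth) auto
qed


lemma module_clique:
  assumes sg: "simple_graph V E" and cf: "claw_free V E" and SV: "S \<subseteq> V"
    and c1: "connected_on E S" and c2: "connected_on (compl_rel E) S"
    and m: "module_of E S M" and ne: "M \<noteq> S"
  shows "is_clique E M"
  unfolding is_clique_def
proof (intro ballI impI, rule ccontr)
  fix a b assume a: "a \<in> M" and b: "b \<in> M" and ab: "a \<noteq> b" and nab: "\<not> E a b"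
  have sym: "\<And>x y. E x y \<Longrightarrow> E y x" and irr: "\<And>x. \<not> E x x"
    using sg unfolding simple_graph_def by blast+
  have MS: "M \<subseteq> S" using m unfolding module_of_def by blast
  have mod: "\<And>v. v \<in> S - M \<Longrightarrow> (\<forall>m\<in>M. E v m) \<or> (\<forall>m\<in>M. \<not> E v m)"
    using m unfolding module_of_def by blast
  obtain y where y: "y \<in> S" "y \<notin> M" using MS ne by blast
  obtain u z where uz: "u \<in> S" "u \<in> M" "z \<in> S" "z \<notin> M" "compl_rel E u z"
    using conn_exit[OF c2, of a M y] a MS y by blast
  have "\<not> E z u" using uz(5) sym unfolding compl_rel_def by blast
  then have zA: "\<forall>m\<in>M. \<not> E z m" using mod[of z] uz by blast
  define A where "A = {z \<in> S - M. \<forall>m\<in>M. \<not> E z m}"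
  have "z \<in> A" using zA uz unfolding A_def by blast
  moreover have "a \<notin> A" using a unfolding A_def by blast
  ultimately obtain u' z' where uz': "u' \<in> S" "u' \<notin> A" "z' \<in> S" "z' \<in> A" "E u' z'"
    using conn_exit[OF c1, of a "S - A" z] a MS uz(3) by blast
  have "u' \<notin> M"
  proof
    assume "u' \<in> M"
    then have "\<not> E z' u'" using uz'(4) unfolding A_def by blast
    then show False using uz'(5) sym by blast
  qed
  then have "\<exists>m\<in>M. E u' m" using uz' unfolding A_def by blast
  then have cu: "\<forall>m\<in>M. E u' m" using mod[of u'] uz' \<open>u' \<notin> M\<close> by blast
  have z'M: "z' \<notin> M" and z'n: "\<forall>m\<in>M. \<not> E z' m" using uz'(4) unfolding A_def by blast+
  have "E u' a" "E u' b" using cu a b by blast+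
  moreover have "\<not> E a z'" "\<not> E b z'" using z'n a b sym by blast+
  moreover have "distinct [u', a, b, z']"
    using ab a b \<open>u' \<notin> M\<close> z'M uz'(5) irr by auto
  moreover have "u' \<in> V" "a \<in> V" "b \<in> V" "z' \<in> V" using uz' a b MS SV by blast+
  ultimately show False using cf nab uz'(5) unfolding claw_free_def by blast
qed

lemma prime_depth:
  assumes sg: "simple_graph V E" and cf: "claw_free V E" and SV: "S \<subseteq> V"
    and c1: "connected_on E S" and c2: "connected_on (compl_rel E) S"
  shows "depth_le E S 3"
proof -
  have "depth_le E C 2" if "md_child E S C" for C
  proof -
    have "max_proper_module E S C" using that c1 c2 unfolding md_child_def by blast
    then have "is_clique E C" using module_clique[OF sg cf SV c1 c2]
      unfolding max_proper_module_def by blast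
    then show ?thesis by (rule clique_depth)
  qed
  then show ?thesis by (metis depth_step numeral_3_eq_3 numeral_2_eq_2)
qed

lemma serial_child_depth:
  assumes sg: "simple_graph V E" and cf: "claw_free V E" and SV: "S \<subseteq> V"
    and nc: "\<not> connected_on (compl_rel E) S" and A: "component_of (compl_rel E) S A"
  shows "depth_le E A 3"
proof -
  have sym: "\<And>x y. E x y \<Longrightarrow> E y x" and irr: "\<And>x. \<not> E x x"
    using sg unfolding simple_graph_def by blast+
  have csym: "\<And>x y. compl_rel E x y \<Longrightarrow> compl_rel E y x" using sym compl_sym by metis
  have AS: "A \<subseteq> S" using comp_sub[OF A] .
  have AV: "A \<subseteq> V" using AS SV by blast
  obtain v where v: "v \<in> S" "v \<notin> A" using comp_not_all[OF csym A nc] by blast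
  have vA: "E v a" if "a \<in> A" for a
  proof (rule ccontr)
    assume "\<not> E v a"
    then have "compl_rel E a v" using v that sym unfolding compl_rel_def by blast
    then have "v \<in> A" using comp_closed[OF A that v(1)] by blast
    then show False using v by blast
  qed
  have Aco: "connected_on (compl_rel E) A" using comp_conn[OF csym A] .
  have "depth_le E C 2" if ch: "md_child E A C" for C
  proof -
    have "is_clique E C"
    proof (cases "connected_on E A")
      case True
      then have "max_proper_module E A C" using ch Aco unfolding md_child_def by blast
      then show ?thesis using module_clique[OF sg cf AV True Aco]
        unfolding max_proper_module_def by blast
    next
      case False
      then have C: "component_of E A C" using ch Aco unfolding md_child_def by blast
      obtain d where d: "d \<in> A" "d \<notin> C" using comp_not_all[OF sym C False] by blast
      have CA: "C \<subseteq> A" using comp_sub[OF C] .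
      show ?thesis unfolding is_clique_def
      proof (intro ballI impI, rule ccontr)
        fix c1 c2 assume c1: "c1 \<in> C" and c2: "c2 \<in> C" and ne: "c1 \<noteq> c2" and n: "\<not> E c1 c2"
        have "\<not> E c1 d" using comp_closed[OF C c1 d(1)] d by blast
        moreover have "\<not> E c2 d" using comp_closed[OF C c2 d(1)] d by blast
        moreover have "E v c1" "E v c2" "E v d" using vA c1 c2 d CA by blast+
        moreover have "distinct [v, c1, c2, d]" using v c1 c2 d CA ne by auto
        moreover have "v \<in> V" "c1 \<in> V" "c2 \<in> V" "d \<in> V" using v c1 c2 d CA AV SV by blast+
        ultimately show False using cf n unfolding claw_free_def by blast
      qed
    qed
    then show ?thesis by (rule clique_depth)
  qed
  then show ?thesis by (metis depth_step numeral_3_eq_3 numeral_2_eq_2)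
qed

lemma conn_depth:
  assumes sg: "simple_graph V E" and cf: "claw_free V E" and SV: "S \<subseteq> V"
    and c1: "connected_on E S"
  shows "depth_le E S 4"
proof -
  have "depth_le E C 3" if ch: "md_child E S C" for C
  proof (cases "connected_on (compl_rel E) S")
    case True
    then have "max_proper_module E S C" using ch c1 unfolding md_child_def by blast
    then have "is_clique E C" using module_clique[OF sg cf SV c1 True]
      unfolding max_proper_module_def by blast
    then show ?thesis using clique_depth depth_mono by fastforce
  next
    case False
    then have "component_of (compl_rel E) S C" using ch c1 unfolding md_child_def by blast
    then show ?thesis using serial_child_depth[OF sg cf SV False] by blast
  qed
  then show ?thesis by (metis depth_step numeral_3_eq_3 Suc_numeral semiring_norm(2) semiring_norm(8))
qed


lemma all_depth:
  assumes sg: "simple_graph V E" and cf: "claw_free V E" and SV: "S \<subseteq> V"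
  shows "depth_le E S 5"
proof (cases "connected_on E S")
  case True
  then show ?thesis using conn_depth[OF sg cf SV True] depth_mono by fastforce
next
  case False
  have sym: "\<And>x y. E x y \<Longrightarrow> E y x"
    using sg unfolding simple_graph_def by blast
  have "depth_le E C 4" if ch: "md_child E S C" for C
  proof -
    have C: "component_of E S C" using ch False unfolding md_child_def by blast
    have "C \<subseteq> V" using comp_sub[OF C] SV by blast
    then show ?thesis using conn_depth[OF sg cf _ comp_conn[OF sym C]] by blast
  qed
  then have "depth_le E S (Suc 4)" by (rule depth_step)
  then show ?thesis by simp
qed

theorem corollary3:
  fixes V :: "'a set" and E :: "'a \<Rightarrow> 'a \<Rightarrow> bool"
  assumes "simple_graph V E" and "V \<noteq> {}" and "claw_free V E"
    and "md_path V E ps"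
  shows "length ps \<le> 5"
  using all_depth[OF assms(1,3) subset_refl] assms(4) unfolding depth_le_def by blast

end
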